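(* Let $\mathbf{X}$ be an observation generated under one of two hypotheses $\mathrm{H}_0,\mathrm{H}_1$ with prior probabilities $P(\mathrm{H}_0),P(\mathrm{H}_1)$; under $\mathrm{H}_i$ a random parameter $\Theta_i\in\Lambda_i\subseteq\mathbb{R}$ has known prior density $p(\theta_i\mid\mathrm{H}_i)$. Let non-negative coefficients $\lambda_i,\mu_i$, $i\in\{0,1\}$, be given, and fixed families of densities $p^{\mathrm D}_{i,\theta_i}$ and $p^{\mathrm E}_{i,\theta_i}$, $i\in\{0,1\}$, $\theta_i\in\Lambda_i$. Then the policy $\pi^\star=(\delta^\star,\hat\theta_0^\star,\hat\theta_1^\star)$ minimizing $$J^{\mathrm{NP}}_{\mathrm u}(\pi)=\sum_{i=0}^1P(\mathrm{H}_i)\bigl(\lambda_i\alpha_i(\pi,p^{\mathrm D}_{i,\theta_i})+\mu_i\beta_i(\pi,p^{\mathrm E}_{i,\theta_i})\bigr)$$ is given by $$\delta^\star(\mathbf{x})=\begin{cases}0,&D_0^{\mathrm{NP}}(\mathbf{x})<D_1^{\mathrm{NP}}(\mathbf{x}),\\ \kappa\in[0,1],&D_0^{\mathrm{NP}}(\mathbf{x})=D_1^{\mathrm{NP}}(\mathbf{x}),\\ 1,&D_0^{\mathrm{NP}}(\mathbf{x})>D_1^{\mathrm{NP}}(\mathbf{x}),\end{cases}\qquad \hat\theta_i^\star(\mathbf{x})=\mathbb{E}_{p^{\mathrm E}_{i,\theta_i}}[\Theta_i\mid\mathrm{H}_i,\mathbf{x}],$$ with $$D_i^{\mathrm{NP}}(\mathbf{x})=P(\mathrm{H}_{1-i})\lambda_{1-i}\,p^{\mathrm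 D}(\mathbf{x}\mid\mathrm{H}_{1-i})+P(\mathrm{H}_i)\mu_i\,\mathrm{Var}_{p^{\mathrm E}_{i,\theta_i}}[\Theta_i\mid\mathrm{H}_i,\mathbf{x}]\,p^{\mathrm E}(\mathbf{x}\mid\mathrm{H}_i).$$ Moreover, $J^{\mathrm{NP}}_{\mathrm u}(\pi^\star)=\int\min\{D_0^{\mathrm{NP}}(\mathbf{x}),D_1^{\mathrm{NP}}(\mathbf{x})\}\,\mathrm{d}\mathbf{x}$.
   Context: A policy $\pi=(\delta,\hat\theta_0,\hat\theta_1)$ consists of a randomized decision rule $\delta$ mapping observations to $[0,1]$ (probability of accepting $\mathrm{H}_1$) and estimators $\hat\theta_i$ with values in $\Lambda_i$. Error probabilities computed with the densities $p^{\mathrm D}$: $\alpha_0(\pi,p^{\mathrm D}_{0,\theta_0})=\iint\delta(\mathbf{x})p^{\mathrm D}_{0,\theta_0}(\mathbf{x})p(\theta_0\mid\mathrm{H}_0)\mathrm{d}\mathbf{x}\mathrm{d}\theta_0$, $\alpha_1(\pi,p^{\mathrm D}_{1,\theta_1})=\iint(1-\delta(\mathbf{x}))p^{\mathrm D}_{1,\theta_1}(\mathbf{x})p(\theta_1\mid\mathrm{H}_1)\mathrm{d}\mathbf{x}\mathrm{d}\theta_1$. Estimation errors computed with the densities $p^{\mathrm E}$: $\beta_0=\iint(1-\delta)(\hat\theta_0-\theta_0)^2p^{\mathrm E}_{0,\theta_0}(\mathbf{x})p(\theta_0\mid\mathrm{H}_0)\mathrm{d}\mathbf{x}\mathrm{d}\theta_0$,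 $\beta_1=\iint\delta(\hat\theta_1-\theta_1)^2p^{\mathrm E}_{1,\theta_1}(\mathbf{x})p(\theta_1\mid\mathrm{H}_1)\mathrm{d}\mathbf{x}\mathrm{d}\theta_1$. Marginals: $p^{\mathrm D}(\mathbf{x}\mid\mathrm{H}_i)=\int p^{\mathrm D}_{i,\theta_i}(\mathbf{x})p(\theta_i\mid\mathrm{H}_i)\mathrm{d}\theta_i$ and similarly $p^{\mathrm E}(\mathbf{x}\mid\mathrm{H}_i)$. Posterior mean and variance $\mathbb{E}_{p^{\mathrm E}_{i,\theta_i}}[\Theta_i\mid\mathrm{H}_i,\mathbf{x}]$, $\mathrm{Var}_{p^{\mathrm E}_{i,\theta_i}}[\Theta_i\mid\mathrm{H}_i,\mathbf{x}]$ are w.r.t. the posterior density $\propto p^{\mathrm E}_{i,\theta_i}(\mathbf{x})p(\theta_i\mid\mathrm{H}_i)$. *)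

theory Defs
  imports "HOL-Analysis.Analysis"
begin

(* Hypotheses are indexed by i :: nat, i \<in> {0,1}.
   Lam i        : parameter set \<Lambda>_i \<subseteq> \<real>
   prior i \<theta>   : prior density p(\<theta> | H_i)
   p i \<theta> x     : observation density p_{i,\<theta>}(x)  (used for both p^D and p^E)
   Observations x live in a Euclidean space 'a with Lebesgue measure lborel. *)

definition marg :: "(nat \<Rightarrow> real set) \<Rightarrow> (nat \<Rightarrow> real \<Rightarrow> real) \<Rightarrow>
    (nat \<Rightarrow> real \<Rightarrow> 'a::euclidean_space \<Rightarrow> real) \<Rightarrow> nat \<Rightarrow> 'a \<Rightarrow> ennreal" where
  "marg Lam prior p i x = (\<integral>\<^sup>+ \<theta>\<in>Lam i. ennreal (p i \<theta> x * prior i \<theta>) \<partial>lborel)"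

definition post_dens :: "(nat \<Rightarrow> real set) \<Rightarrow> (nat \<Rightarrow> real \<Rightarrow> real) \<Rightarrow>
    (nat \<Rightarrow> real \<Rightarrow> 'a::euclidean_space \<Rightarrow> real) \<Rightarrow> nat \<Rightarrow> 'a \<Rightarrow> real \<Rightarrow> real" where
  "post_dens Lam prior p i x \<theta> = p i \<theta> x * prior i \<theta> / enn2real (marg Lam prior p i x)"

definition post_mean :: "(nat \<Rightarrow> real set) \<Rightarrow> (nat \<Rightarrow> real \<Rightarrow> real) \<Rightarrow>
    (nat \<Rightarrow> real \<Rightarrow> 'a::euclidean_space \<Rightarrow> real) \<Rightarrow> nat \<Rightarrow> 'a \<Rightarrow> real" where
  "post_mean Lam prior p i x =
     set_lebesgue_integral lborel (Lam i) (\<lambda>\<theta>. \<theta> * post_dens Lam prior p i x \<theta>)"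

definition post_var :: "(nat \<Rightarrow> real set) \<Rightarrow> (nat \<Rightarrow> real \<Rightarrow> real) \<Rightarrow>
    (nat \<Rightarrow> real \<Rightarrow> 'a::euclidean_space \<Rightarrow> real) \<Rightarrow> nat \<Rightarrow> 'a \<Rightarrow> ennreal" where
  "post_var Lam prior p i x =
     (\<integral>\<^sup>+ \<theta>\<in>Lam i. ennreal ((\<theta> - post_mean Lam prior p i x)\<^sup>2 * post_dens Lam prior p i x \<theta>) \<partial>lborel)"

definition alpha0 :: "(nat \<Rightarrow> real set) \<Rightarrow> (nat \<Rightarrow> real \<Rightarrow> real) \<Rightarrow>
    (nat \<Rightarrow> real \<Rightarrow> 'a::euclidean_space \<Rightarrow> real) \<Rightarrow> ('a \<Rightarrow> real) \<Rightarrow> ennreal" where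
  "alpha0 Lam prior pD \<delta> =
     (\<integral>\<^sup>+ \<theta>\<in>Lam 0. (\<integral>\<^sup>+ x. ennreal (\<delta> x * pD 0 \<theta> x * prior 0 \<theta>) \<partial>lborel) \<partial>lborel)"

definition alpha1 :: "(nat \<Rightarrow> real set) \<Rightarrow> (nat \<Rightarrow> real \<Rightarrow> real) \<Rightarrow>
    (nat \<Rightarrow> real \<Rightarrow> 'a::euclidean_space \<Rightarrow> real) \<Rightarrow> ('a \<Rightarrow> real) \<Rightarrow> ennreal" where
  "alpha1 Lam prior pD \<delta> =
     (\<integral>\<^sup>+ \<theta>\<in>Lam 1. (\<integral>\<^sup>+ x. ennreal ((1 - \<delta> x) * pD 1 \<theta> x * prior 1 \<theta>) \<partial>lborel) \<partial>lborel)"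

definition beta0 :: "(nat \<Rightarrow> real set) \<Rightarrow> (nat \<Rightarrow> real \<Rightarrow> real) \<Rightarrow>
    (nat \<Rightarrow> real \<Rightarrow> 'a::euclidean_space \<Rightarrow> real) \<Rightarrow> ('a \<Rightarrow> real) \<Rightarrow> ('a \<Rightarrow> real) \<Rightarrow> ennreal" where
  "beta0 Lam prior pE \<delta> est0 =
     (\<integral>\<^sup>+ \<theta>\<in>Lam 0. (\<integral>\<^sup>+ x. ennreal ((1 - \<delta> x) * (est0 x - \<theta>)\<^sup>2 * pE 0 \<theta> x * prior 0 \<theta>) \<partial>lborel) \<partial>lborel)"

definition beta1 :: "(nat \<Rightarrow> real set) \<Rightarrow> (nat \<Rightarrow> real \<Rightarrow> real) \<Rightarrow>
    (nat \<Rightarrow> real \<Rightarrow> 'a::euclidean_space \<Rightarrow> real) \<Rightarrow> ('a \<Rightarrow> real) \<Rightarrow> ('a \<Rightarrow> real) \<Rightarrow> ennreal" where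
  "beta1 Lam prior pE \<delta> est1 =
     (\<integral>\<^sup>+ \<theta>\<in>Lam 1. (\<integral>\<^sup>+ x. ennreal (\<delta> x * (est1 x - \<theta>)\<^sup>2 * pE 1 \<theta> x * prior 1 \<theta>) \<partial>lborel) \<partial>lborel)"

text \<open>The cost J^NP_u of a policy (delta, est0, est1); PH i = P(H_i).\<close>
definition J_NP :: "(nat \<Rightarrow> real) \<Rightarrow> (nat \<Rightarrow> real) \<Rightarrow> (nat \<Rightarrow> real) \<Rightarrow>
    (nat \<Rightarrow> real set) \<Rightarrow> (nat \<Rightarrow> real \<Rightarrow> real) \<Rightarrow>
    (nat \<Rightarrow> real \<Rightarrow> 'a::euclidean_space \<Rightarrow> real) \<Rightarrow> (nat \<Rightarrow> real \<Rightarrow> 'a \<Rightarrow> real) \<Rightarrow>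
    ('a \<Rightarrow> real) \<Rightarrow> ('a \<Rightarrow> real) \<Rightarrow> ('a \<Rightarrow> real) \<Rightarrow> ennreal" where
  "J_NP PH lam mu Lam prior pD pE \<delta> est0 est1 =
     ennreal (PH 0) * (ennreal (lam 0) * alpha0 Lam prior pD \<delta> + ennreal (mu 0) * beta0 Lam prior pE \<delta> est0)
   + ennreal (PH 1) * (ennreal (lam 1) * alpha1 Lam prior pD \<delta> + ennreal (mu 1) * beta1 Lam prior pE \<delta> est1)"

definition D_NP :: "(nat \<Rightarrow> real) \<Rightarrow> (nat \<Rightarrow> real) \<Rightarrow> (nat \<Rightarrow> real) \<Rightarrow>
    (nat \<Rightarrow> real set) \<Rightarrow> (nat \<Rightarrow> real \<Rightarrow> real) \<Rightarrow>
    (nat \<Rightarrow> real \<Rightarrow> 'a::euclidean_space \<Rightarrow> real) \<Rightarrow> (nat \<Rightarrow> real \<Rightarrow> 'a \<Rightarrow> real) \<Rightarrow>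
    nat \<Rightarrow> 'a \<Rightarrow> ennreal" where
  "D_NP PH lam mu Lam prior pD pE i x =
     ennreal (PH (1 - i) * lam (1 - i)) * marg Lam prior pD (1 - i) x
   + ennreal (PH i * mu i) * post_var Lam prior pE i x * marg Lam prior pE i x"

definition delta_star :: "('a \<Rightarrow> nat \<Rightarrow> ennreal) \<Rightarrow> real \<Rightarrow> 'a \<Rightarrow> real" where
  "delta_star D \<kappa> x =
     (if D x 0 < D x 1 then 0 else if D x 0 = D x 1 then \<kappa> else 1)"

end

theory Submission
  imports Defs
begin

lemma meas_swap:
  fixes p :: "real \<Rightarrow> 'a::euclidean_space \<Rightarrow> real"
  assumes "(\<lambda>(\<theta>, x). p \<theta> x) \<in> borel_measurable (lborel \<Otimes>\<^sub>M lborel)"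
  shows "(\<lambda>z. p (snd z) (fst z)) \<in> borel_measurable ((lborel::'a measure) \<Otimes>\<^sub>M (lborel::real measure))"
proof -
  have "(\<lambda>z. (\<lambda>(\<theta>, x). p \<theta> x) (snd z, fst z)) \<in> borel_measurable ((lborel::'a measure) \<Otimes>\<^sub>M (lborel::real measure))"
    by (rule measurable_compose[OF _ assms]) measurable
  then show ?thesis by simp
qed

lemma meas_marg:
  fixes p :: "nat \<Rightarrow> real \<Rightarrow> 'a::euclidean_space \<Rightarrow> real"
  assumes pm: "(\<lambda>(\<theta>, x). p i \<theta> x) \<in> borel_measurable (lborel \<Otimes>\<^sub>M lborel)"
    and [measurable]: "prior i \<in> borel_measurable lborel" "Lam i \<in> sets lborel"
  shows "marg Lam prior p i \<in> borel_measurable lborel"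
proof -
  note [measurable] = meas_swap[OF pm]
  show ?thesis unfolding marg_def[abs_def]
    by measurable
qed

lemma meas_post_dens:
  fixes p :: "nat \<Rightarrow> real \<Rightarrow> 'a::euclidean_space \<Rightarrow> real"
  assumes pm: "(\<lambda>(\<theta>, x). p i \<theta> x) \<in> borel_measurable (lborel \<Otimes>\<^sub>M lborel)"
    and [measurable]: "prior i \<in> borel_measurable lborel" "Lam i \<in> sets lborel"
  shows "(\<lambda>z. post_dens Lam prior p i (fst z) (snd z)) \<in> borel_measurable ((lborel::'a measure) \<Otimes>\<^sub>M (lborel::real measure))"
proof -
  note [measurable] = meas_swap[OF pm] meas_marg[where p=p and i=i and prior=prior and Lam=Lam, OF assms]
  show ?thesis unfolding post_dens_def
    by measurable
qed

lemma meas_post_mean: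
  fixes p :: "nat \<Rightarrow> real \<Rightarrow> 'a::euclidean_space \<Rightarrow> real"
  assumes pm: "(\<lambda>(\<theta>, x). p i \<theta> x) \<in> borel_measurable (lborel \<Otimes>\<^sub>M lborel)"
    and [measurable]: "prior i \<in> borel_measurable lborel" "Lam i \<in> sets lborel"
  shows "post_mean Lam prior p i \<in> borel_measurable lborel"
proof -
  note [measurable] = meas_post_dens[where p=p and i=i and prior=prior and Lam=Lam, OF assms]
  show ?thesis unfolding post_mean_def[abs_def] set_lebesgue_integral_def
    by measurable
qed

lemma meas_post_var:
  fixes p :: "nat \<Rightarrow> real \<Rightarrow> 'a::euclidean_space \<Rightarrow> real"
  assumes pm: "(\<lambda>(\<theta>, x). p i \<theta> x) \<in> borel_measurable (lborel \<Otimes>\<^sub>M lborel)"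
    and [measurable]: "prior i \<in> borel_measurable lborel" "Lam i \<in> sets lborel"
  shows "post_var Lam prior p i \<in> borel_measurable lborel"
proof -
  note [measurable] = meas_post_dens[where p=p and i=i and prior=prior and Lam=Lam, OF assms] meas_post_mean[where p=p and i=i and prior=prior and Lam=Lam, OF assms]
  show ?thesis unfolding post_var_def[abs_def]
    by measurable
qed

lemma var_le:
  fixes q :: "real \<Rightarrow> real"
  assumes [measurable]: "q \<in> borel_measurable lborel" "S \<in> sets lborel"
    and q0: "\<And>\<theta>. 0 \<le> q \<theta>"
    and norm: "(\<integral>\<^sup>+\<theta>\<in>S. ennreal (q \<theta>) \<partial>lborel) = 1"
  shows "(\<integral>\<^sup>+\<theta>\<in>S. ennreal ((\<theta> - (LINT t:S|lborel. t * q t))\<^sup>2 * q \<theta>) \<partial>lborel)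
          \<le> (\<integral>\<^sup>+\<theta>\<in>S. ennreal ((c - \<theta>)\<^sup>2 * q \<theta>) \<partial>lborel)"
proof -
  define w where "w t = indicator S t * q t" for t
  have w0: "0 \<le> w t" for t using q0 by (simp add: w_def)
  have [measurable]: "w \<in> borel_measurable lborel" unfolding w_def[abs_def] by measurable
  have setw: "(\<integral>\<^sup>+\<theta>\<in>S. ennreal (f \<theta> * q \<theta>) \<partial>lborel) = (\<integral>\<^sup>+\<theta>. ennreal (f \<theta> * w \<theta>) \<partial>lborel)" for f
    by (rule nn_integral_cong) (auto simp: w_def split: split_indicator)
  define m where "m = (LINT t:S|lborel. t * q t)"
  have m_eq: "m = (\<integral>t. t * w t \<partial>lborel)"
    unfolding m_def set_lebesgue_integral_def w_def by (rule Bochner_Integration.integral_cong) auto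
  have wn: "(\<integral>\<^sup>+\<theta>. ennreal (w \<theta>) \<partial>lborel) = 1"
    using norm setw[of "\<lambda>_. 1"] by simp
  have wi: "integrable lborel w"
    by (rule integrableI_nn_integral_finite[where x=1]) (use wn w0 in auto)
  have wI: "(\<integral>t. w t \<partial>lborel) = 1"
    using integral_eq_nn_integral[where M=lborel and f=w] wn w0 by simp
  show ?thesis
  proof (cases "integrable lborel (\<lambda>t. t\<^sup>2 * w t)")
    case True
    have ti: "integrable lborel (\<lambda>t. t * w t)"
    proof (rule Bochner_Integration.integrable_bound[OF Bochner_Integration.integrable_add[OF wi True]])
      show "(\<lambda>t. t * w t) \<in> borel_measurable lborel" by measurable
      show "AE x in lborel. norm (x * w x) \<le> norm (w x + x\<^sup>2 * w x)"
      proof (rule AE_I2)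
        fix x :: real
        have a1: "0 \<le> (\<bar>x\<bar> - 1) * (\<bar>x\<bar> - 1)" by simp
        have a2: "x\<^sup>2 = \<bar>x\<bar> * \<bar>x\<bar>" by (simp add: power2_eq_square)
        have "\<bar>x\<bar> \<le> 1 + x\<^sup>2" using a1 unfolding a2 by (simp add: algebra_simps)
        then have "\<bar>x\<bar> * w x \<le> (1 + x\<^sup>2) * w x" by (rule mult_right_mono) (rule w0)
        then show "norm (x * w x) \<le> norm (w x + x\<^sup>2 * w x)"
          using w0[of x] by (simp add: abs_mult algebra_simps)
      qed
    qed
    define E2 where "E2 = (\<integral>t. t\<^sup>2 * w t \<partial>lborel)"
    have key: "(\<integral>\<^sup>+\<theta>. ennreal ((a - \<theta>)\<^sup>2 * w \<theta>) \<partial>lborel) = ennreal (a\<^sup>2 - 2 * a * m + E2)" for a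
    proof -
      have eqf: "(\<lambda>\<theta>. (a - \<theta>)\<^sup>2 * w \<theta>) = (\<lambda>\<theta>. a\<^sup>2 * w \<theta> - 2 * a * (\<theta> * w \<theta>) + \<theta>\<^sup>2 * w \<theta>)"
        by (auto simp: power2_eq_square algebra_simps)
      have ii: "integrable lborel (\<lambda>\<theta>. a\<^sup>2 * w \<theta> - 2 * a * (\<theta> * w \<theta>) + \<theta>\<^sup>2 * w \<theta>)"
        using wi ti True by auto
      have "(\<integral>\<^sup>+\<theta>. ennreal ((a - \<theta>)\<^sup>2 * w \<theta>) \<partial>lborel) = ennreal (\<integral>\<theta>. (a - \<theta>)\<^sup>2 * w \<theta> \<partial>lborel)"
        by (rule nn_integral_eq_integral) (use ii eqf w0 in auto)
      also have "(\<integral>\<theta>. (a - \<theta>)\<^sup>2 * w \<theta> \<partial>lborel) = a\<^sup>2 - 2 * a * m + E2"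
        unfolding eqf using wi ti True wI by (simp add: m_eq E2_def)
      finally show ?thesis .
    qed
    show ?thesis
      unfolding setw m_def[symmetric]
      using key[of m] key[of c] zero_le_square[of "c - m"]
      by (auto intro!: ennreal_leI simp: power2_eq_square algebra_simps)
  next
    case False
    have inf: "(\<integral>\<^sup>+\<theta>. ennreal (\<theta>\<^sup>2 * w \<theta>) \<partial>lborel) = \<infinity>"
    proof (rule ccontr)
      assume "(\<integral>\<^sup>+\<theta>. ennreal (\<theta>\<^sup>2 * w \<theta>) \<partial>lborel) \<noteq> \<infinity>"
      then obtain r where "(\<integral>\<^sup>+\<theta>. ennreal (\<theta>\<^sup>2 * w \<theta>) \<partial>lborel) = ennreal r"
        by (cases "(\<integral>\<^sup>+\<theta>. ennreal (\<theta>\<^sup>2 * w \<theta>) \<partial>lborel)" rule: ennreal_cases) auto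
      then have "integrable lborel (\<lambda>t. t\<^sup>2 * w t)"
        by (intro integrableI_nn_integral_finite) (auto simp: w0)
      with False show False by simp
    qed
    have "(\<integral>\<^sup>+\<theta>. ennreal (\<theta>\<^sup>2 * w \<theta>) \<partial>lborel) \<le> (\<integral>\<^sup>+\<theta>. 2 * ennreal ((c - \<theta>)\<^sup>2 * w \<theta>) + 2 * c\<^sup>2 * ennreal (w \<theta>) \<partial>lborel)"
    proof (rule nn_integral_mono)
      fix \<theta> :: real
      have "\<theta>\<^sup>2 \<le> 2 * (c - \<theta>)\<^sup>2 + 2 * c\<^sup>2"
          using zero_le_square[of "2 * c - \<theta>"] by (simp add: power2_eq_square algebra_simps)
      then have "\<theta>\<^sup>2 * w \<theta> \<le> 2 * ((c - \<theta>)\<^sup>2 * w \<theta>) + 2 * c\<^sup>2 * w \<theta>"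
        using mult_right_mono[OF _ w0[of \<theta>], of "\<theta>\<^sup>2" "2 * (c - \<theta>)\<^sup>2 + 2 * c\<^sup>2"] by (simp add: algebra_simps)
      then show "ennreal (\<theta>\<^sup>2 * w \<theta>) \<le> 2 * ennreal ((c - \<theta>)\<^sup>2 * w \<theta>) + 2 * c\<^sup>2 * ennreal (w \<theta>)"
      proof -
        have "ennreal (\<theta>\<^sup>2 * w \<theta>) \<le> ennreal (2 * ((c - \<theta>)\<^sup>2 * w \<theta>) + 2 * c\<^sup>2 * w \<theta>)"
          by (rule ennreal_leI) fact
        also have "\<dots> = 2 * ennreal ((c - \<theta>)\<^sup>2 * w \<theta>) + 2 * c\<^sup>2 * ennreal (w \<theta>)"
          using w0[of \<theta>] by (subst ennreal_plus) (auto simp: ennreal_mult)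
        finally show ?thesis .
      qed
    qed
    also have "\<dots> = 2 * (\<integral>\<^sup>+\<theta>. ennreal ((c - \<theta>)\<^sup>2 * w \<theta>) \<partial>lborel) + 2 * c\<^sup>2 * (\<integral>\<^sup>+\<theta>. ennreal (w \<theta>) \<partial>lborel)"
      by (subst nn_integral_add) (auto simp: nn_integral_cmult)
    finally have "(\<integral>\<^sup>+\<theta>. ennreal ((c - \<theta>)\<^sup>2 * w \<theta>) \<partial>lborel) = \<infinity>"
      using inf wn by (auto simp: ennreal_mult_eq_top_iff ennreal_top_mult top_unique)
    then show ?thesis unfolding setw by simp
  qed
qed

lemma meas_sec:
  fixes p :: "real \<Rightarrow> 'a::euclidean_space \<Rightarrow> real"
  assumes "(\<lambda>(\<theta>, x). p \<theta> x) \<in> borel_measurable (lborel \<Otimes>\<^sub>M lborel)"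
  shows "(\<lambda>\<theta>. p \<theta> x) \<in> borel_measurable lborel"
proof -
  have "(\<lambda>\<theta>. (\<lambda>(\<theta>, x). p \<theta> x) (\<theta>, x)) \<in> borel_measurable lborel"
    by (rule measurable_compose[OF _ assms]) measurable
  then show ?thesis by simp
qed

lemma swap_int:
  fixes F :: "real \<Rightarrow> 'a::euclidean_space \<Rightarrow> real"
  assumes Fm[measurable]: "(\<lambda>z. F (snd z) (fst z)) \<in> borel_measurable ((lborel::'a measure) \<Otimes>\<^sub>M (lborel::real measure))"
    and S[measurable]: "S \<in> sets lborel"
  shows "(\<integral>\<^sup>+\<theta>\<in>S. (\<integral>\<^sup>+x. ennreal (F \<theta> x) \<partial>lborel) \<partial>lborel) = (\<integral>\<^sup>+x. (\<integral>\<^sup>+\<theta>\<in>S. ennreal (F \<theta> x) \<partial>lborel) \<partial>lborel)"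
proof -
  have sec: "(\<lambda>x. F \<theta> x) \<in> borel_measurable lborel" for \<theta>
  proof -
    have "(\<lambda>x. (\<lambda>z. F (snd z) (fst z)) (x, \<theta>)) \<in> borel_measurable lborel"
      by (rule measurable_compose[OF _ Fm]) measurable
    then show ?thesis by simp
  qed
  have "(\<integral>\<^sup>+\<theta>\<in>S. (\<integral>\<^sup>+x. ennreal (F \<theta> x) \<partial>lborel) \<partial>lborel) = (\<integral>\<^sup>+\<theta>. (\<integral>\<^sup>+x. ennreal (F \<theta> x) * indicator S \<theta> \<partial>lborel) \<partial>lborel)"
    by (rule nn_integral_cong) (rule nn_integral_multc[symmetric], rule measurable_compose[OF sec measurable_ennreal])
  also have "\<dots> = (\<integral>\<^sup>+x. (\<integral>\<^sup>+\<theta>. ennreal (F \<theta> x) * indicator S \<theta> \<partial>lborel) \<partial>lborel)"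
    by (rule lborel_pair.Fubini') measurable
  finally show ?thesis .
qed

lemma err_pt:
  fixes p :: "nat \<Rightarrow> real \<Rightarrow> 'a::euclidean_space \<Rightarrow> real"
  assumes sec[measurable]: "(\<lambda>\<theta>. p i \<theta> x) \<in> borel_measurable lborel"
    and [measurable]: "prior i \<in> borel_measurable lborel" "Lam i \<in> sets lborel"
    and p0: "\<And>\<theta>. 0 \<le> p i \<theta> x" and pr0: "\<And>\<theta>. 0 \<le> prior i \<theta>"
    and fin: "marg Lam prior p i x \<noteq> \<infinity>"
  shows "post_var Lam prior p i x * marg Lam prior p i x
           \<le> (\<integral>\<^sup>+\<theta>\<in>Lam i. ennreal ((c - \<theta>)\<^sup>2 * p i \<theta> x * prior i \<theta>) \<partial>lborel)"
    and "(\<integral>\<^sup>+\<theta>\<in>Lam i. ennreal ((post_mean Lam prior p i x - \<theta>)\<^sup>2 * p i \<theta> x * prior i \<theta>) \<partial>lborel)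
           = post_var Lam prior p i x * marg Lam prior p i x"
proof -
  define m where "m = marg Lam prior p i x"
  have pp0: "0 \<le> p i \<theta> x * prior i \<theta>" for \<theta> using p0 pr0 by simp
  have "(\<integral>\<^sup>+\<theta>\<in>Lam i. ennreal ((post_mean Lam prior p i x - \<theta>)\<^sup>2 * p i \<theta> x * prior i \<theta>) \<partial>lborel)
           = post_var Lam prior p i x * m
        \<and> post_var Lam prior p i x * m
           \<le> (\<integral>\<^sup>+\<theta>\<in>Lam i. ennreal ((c - \<theta>)\<^sup>2 * p i \<theta> x * prior i \<theta>) \<partial>lborel)"
  proof (cases "m = 0")
    case True
    have "AE \<theta> in lborel. ennreal (p i \<theta> x * prior i \<theta>) * indicator (Lam i) \<theta> = 0"
      using True unfolding m_def marg_def by (subst nn_integral_0_iff_AE[symmetric]) auto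
    then have "AE \<theta> in lborel. ennreal ((a - \<theta>)\<^sup>2 * p i \<theta> x * prior i \<theta>) * indicator (Lam i) \<theta> = 0" for a
    proof (rule AE_mp, intro AE_I2 impI)
      fix \<theta>
      assume "ennreal (p i \<theta> x * prior i \<theta>) * indicator (Lam i) \<theta> = 0"
      then have "\<theta> \<notin> Lam i \<or> p i \<theta> x * prior i \<theta> = 0"
        using pp0[of \<theta>] by (auto split: split_indicator)
      then show "ennreal ((a - \<theta>)\<^sup>2 * p i \<theta> x * prior i \<theta>) * indicator (Lam i) \<theta> = 0"
        by (auto split: split_indicator simp: mult.assoc)
    qed
    then have "(\<integral>\<^sup>+\<theta>\<in>Lam i. ennreal ((a - \<theta>)\<^sup>2 * p i \<theta> x * prior i \<theta>) \<partial>lborel) = 0" for a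
      by (subst nn_integral_cong_AE[where v="\<lambda>_. 0"]) auto
    then show ?thesis using True by simp
  next
    case False
    then obtain r where r: "m = ennreal r" "0 < r"
      using fin unfolding m_def[symmetric]
      by (cases m rule: ennreal_cases) (auto simp: zero_less_iff_neq_zero)
    define q where "q \<theta> = post_dens Lam prior p i x \<theta>" for \<theta>
    have q_eq: "q \<theta> = p i \<theta> x * prior i \<theta> / r" for \<theta>
      using r unfolding q_def post_dens_def m_def[symmetric] by simp
    have q0: "0 \<le> q \<theta>" for \<theta> using pp0[of \<theta>] r by (simp add: q_eq)
    have [measurable]: "q \<in> borel_measurable lborel" unfolding q_eq[abs_def] by measurable
    have scale: "(\<integral>\<^sup>+\<theta>\<in>Lam i. ennreal (f \<theta> * p i \<theta> x * prior i \<theta>) \<partial>lborel)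
        = (\<integral>\<^sup>+\<theta>\<in>Lam i. ennreal (f \<theta> * q \<theta>) \<partial>lborel) * ennreal r"
      if fm[measurable]: "f \<in> borel_measurable lborel" and f0: "\<And>\<theta>. 0 \<le> f \<theta>" for f
    proof -
      have "(\<integral>\<^sup>+\<theta>\<in>Lam i. ennreal (f \<theta> * p i \<theta> x * prior i \<theta>) \<partial>lborel)
          = (\<integral>\<^sup>+\<theta>. ennreal (f \<theta> * q \<theta>) * indicator (Lam i) \<theta> * ennreal r \<partial>lborel)"
      proof (rule nn_integral_cong)
        fix \<theta>
        have eq: "f \<theta> * p i \<theta> x * prior i \<theta> = (f \<theta> * q \<theta>) * r" using r by (simp add: q_eq)
        have fq: "0 \<le> f \<theta> * q \<theta>" using f0[of \<theta>] q0[of \<theta>] by simp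
        show "ennreal (f \<theta> * p i \<theta> x * prior i \<theta>) * indicator (Lam i) \<theta> =
            ennreal (f \<theta> * q \<theta>) * indicator (Lam i) \<theta> * ennreal r"
          unfolding eq ennreal_mult[OF fq less_imp_le[OF r(2)]] by (simp add: mult_ac)
      qed
      also have "\<dots> = (\<integral>\<^sup>+\<theta>\<in>Lam i. ennreal (f \<theta> * q \<theta>) \<partial>lborel) * ennreal r"
        by (rule nn_integral_multc) measurable
      finally show ?thesis .
    qed
    have "m = (\<integral>\<^sup>+\<theta>\<in>Lam i. ennreal (1 * q \<theta>) \<partial>lborel) * ennreal r"
      unfolding m_def marg_def using scale[of "\<lambda>_. 1"] by simp
    then have "ennreal r * (\<integral>\<^sup>+\<theta>\<in>Lam i. ennreal (q \<theta>) \<partial>lborel) = ennreal r * 1"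
      using r by (simp add: mult.commute)
    then have qn: "(\<integral>\<^sup>+\<theta>\<in>Lam i. ennreal (q \<theta>) \<partial>lborel) = 1"
      using r by (subst (asm) ennreal_mult_cancel_left) auto
    have pm: "post_mean Lam prior p i x = (LINT t:Lam i|lborel. t * q t)"
      unfolding post_mean_def q_def ..
    have pv: "post_var Lam prior p i x = (\<integral>\<^sup>+\<theta>\<in>Lam i. ennreal ((\<theta> - (LINT t:Lam i|lborel. t * q t))\<^sup>2 * q \<theta>) \<partial>lborel)"
      unfolding post_var_def pm q_def ..
    show ?thesis
    proof
      show "(\<integral>\<^sup>+\<theta>\<in>Lam i. ennreal ((post_mean Lam prior p i x - \<theta>)\<^sup>2 * p i \<theta> x * prior i \<theta>) \<partial>lborel)
           = post_var Lam prior p i x * m"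
        unfolding r(1) pv
        by (subst scale) (auto simp: pm power2_commute)
      show "post_var Lam prior p i x * m
           \<le> (\<integral>\<^sup>+\<theta>\<in>Lam i. ennreal ((c - \<theta>)\<^sup>2 * p i \<theta> x * prior i \<theta>) \<partial>lborel)"
        unfolding r(1) pv
        using assms(3) by (subst scale) (auto intro!: mult_right_mono var_le qn q0)
    qed
  qed
  then show "post_var Lam prior p i x * marg Lam prior p i x
           \<le> (\<integral>\<^sup>+\<theta>\<in>Lam i. ennreal ((c - \<theta>)\<^sup>2 * p i \<theta> x * prior i \<theta>) \<partial>lborel)"
    and "(\<integral>\<^sup>+\<theta>\<in>Lam i. ennreal ((post_mean Lam prior p i x - \<theta>)\<^sup>2 * p i \<theta> x * prior i \<theta>) \<partial>lborel)
           = post_var Lam prior p i x * marg Lam prior p i x"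
    unfolding m_def by auto
qed

definition errf :: "(nat \<Rightarrow> real set) \<Rightarrow> (nat \<Rightarrow> real \<Rightarrow> real) \<Rightarrow>
    (nat \<Rightarrow> real \<Rightarrow> 'a::euclidean_space \<Rightarrow> real) \<Rightarrow> nat \<Rightarrow> real \<Rightarrow> 'a \<Rightarrow> ennreal" where
  "errf Lam prior p i c x = (\<integral>\<^sup>+\<theta>\<in>Lam i. ennreal ((c - \<theta>)\<^sup>2 * (p i \<theta> x * prior i \<theta>)) \<partial>lborel)"

lemma meas_errf:
  fixes p :: "nat \<Rightarrow> real \<Rightarrow> 'a::euclidean_space \<Rightarrow> real"
  assumes pm: "(\<lambda>(\<theta>, x). p i \<theta> x) \<in> borel_measurable (lborel \<Otimes>\<^sub>M lborel)"
    and [measurable]: "prior i \<in> borel_measurable lborel" "Lam i \<in> sets lborel"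
    and [measurable]: "e \<in> borel_measurable lborel"
  shows "(\<lambda>x. errf Lam prior p i (e x) x) \<in> borel_measurable lborel"
proof -
  note [measurable] = meas_swap[OF pm]
  show ?thesis unfolding errf_def by measurable
qed

lemma swap_pull:
  fixes a :: "'a::euclidean_space \<Rightarrow> real" and h :: "real \<Rightarrow> 'a \<Rightarrow> real"
  assumes [measurable]: "a \<in> borel_measurable lborel" and a0: "\<And>x. 0 \<le> a x"
    and hm[measurable]: "(\<lambda>z. h (snd z) (fst z)) \<in> borel_measurable ((lborel::'a measure) \<Otimes>\<^sub>M (lborel::real measure))"
    and h0: "\<And>\<theta> x. 0 \<le> h \<theta> x" and [measurable]: "S \<in> sets lborel"
  shows "(\<integral>\<^sup>+\<theta>\<in>S. (\<integral>\<^sup>+x. ennreal (a x * h \<theta> x) \<partial>lborel) \<partial>lborel)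
       = (\<integral>\<^sup>+x. ennreal (a x) * (\<integral>\<^sup>+\<theta>\<in>S. ennreal (h \<theta> x) \<partial>lborel) \<partial>lborel)"
proof -
  have sec: "(\<lambda>\<theta>. h \<theta> x) \<in> borel_measurable lborel" for x
  proof -
    have "(\<lambda>\<theta>. (\<lambda>z. h (snd z) (fst z)) (x, \<theta>)) \<in> borel_measurable lborel"
      by (rule measurable_compose[OF _ hm]) measurable
    then show ?thesis by simp
  qed
  have "(\<integral>\<^sup>+\<theta>\<in>S. (\<integral>\<^sup>+x. ennreal (a x * h \<theta> x) \<partial>lborel) \<partial>lborel)
       = (\<integral>\<^sup>+x. (\<integral>\<^sup>+\<theta>\<in>S. ennreal (a x * h \<theta> x) \<partial>lborel) \<partial>lborel)"
    by (rule swap_int) measurable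
  also have "\<dots> = (\<integral>\<^sup>+x. ennreal (a x) * (\<integral>\<^sup>+\<theta>\<in>S. ennreal (h \<theta> x) \<partial>lborel) \<partial>lborel)"
  proof (rule nn_integral_cong)
    fix x
    have "(\<integral>\<^sup>+\<theta>\<in>S. ennreal (a x * h \<theta> x) \<partial>lborel) = (\<integral>\<^sup>+\<theta>. ennreal (a x) * (ennreal (h \<theta> x) * indicator S \<theta>) \<partial>lborel)"
      by (rule nn_integral_cong) (simp add: ennreal_mult a0 h0 mult.assoc)
    also have "\<dots> = ennreal (a x) * (\<integral>\<^sup>+\<theta>\<in>S. ennreal (h \<theta> x) \<partial>lborel)"
      by (rule nn_integral_cmult) (use sec in measurable)
    finally show "(\<integral>\<^sup>+\<theta>\<in>S. ennreal (a x * h \<theta> x) \<partial>lborel) = ennreal (a x) * (\<integral>\<^sup>+\<theta>\<in>S. ennreal (h \<theta> x) \<partial>lborel)" .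
  qed
  finally show ?thesis .
qed

lemma marg_AE_fin:
  fixes p :: "nat \<Rightarrow> real \<Rightarrow> 'a::euclidean_space \<Rightarrow> real"
  assumes pm: "(\<lambda>(\<theta>, x). p i \<theta> x) \<in> borel_measurable (lborel \<Otimes>\<^sub>M lborel)"
    and [measurable]: "prior i \<in> borel_measurable lborel" "Lam i \<in> sets lborel"
    and p0: "\<And>\<theta> x. 0 \<le> p i \<theta> x" and pr0: "\<And>\<theta>. 0 \<le> prior i \<theta>"
    and pn: "\<And>\<theta>. \<theta> \<in> Lam i \<Longrightarrow> (\<integral>\<^sup>+ x. ennreal (p i \<theta> x) \<partial>lborel) = 1"
    and prn: "(\<integral>\<^sup>+ \<theta>\<in>Lam i. ennreal (prior i \<theta>) \<partial>lborel) = 1"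
  shows "AE x in lborel. marg Lam prior p i x \<noteq> \<infinity>"
proof -
  note [measurable] = meas_swap[OF pm] meas_marg[where p=p and i=i and prior=prior and Lam=Lam, OF assms(1-3)]
  have "(\<integral>\<^sup>+x. marg Lam prior p i x \<partial>lborel) = (\<integral>\<^sup>+\<theta>\<in>Lam i. (\<integral>\<^sup>+x. ennreal (p i \<theta> x * prior i \<theta>) \<partial>lborel) \<partial>lborel)"
    unfolding marg_def by (rule swap_int[symmetric]) measurable
  also have "\<dots> = (\<integral>\<^sup>+\<theta>\<in>Lam i. ennreal (prior i \<theta>) \<partial>lborel)"
  proof (rule nn_integral_cong)
    fix \<theta>
    have "(\<integral>\<^sup>+x. ennreal (p i \<theta> x * prior i \<theta>) \<partial>lborel) = (\<integral>\<^sup>+x. ennreal (p i \<theta> x) * ennreal (prior i \<theta>) \<partial>lborel)"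
      by (simp add: ennreal_mult p0 pr0)
    also have "\<dots> = (\<integral>\<^sup>+x. ennreal (p i \<theta> x) \<partial>lborel) * ennreal (prior i \<theta>)"
    proof (rule nn_integral_multc)
      have "(\<lambda>x. (\<lambda>(\<theta>, x). p i \<theta> x) (\<theta>, x)) \<in> borel_measurable lborel"
        by (rule measurable_compose[OF _ pm]) measurable
      then show "(\<lambda>x. ennreal (p i \<theta> x)) \<in> borel_measurable lborel" by simp
    qed
    finally show "(\<integral>\<^sup>+x. ennreal (p i \<theta> x * prior i \<theta>) \<partial>lborel) * indicator (Lam i) \<theta> = ennreal (prior i \<theta>) * indicator (Lam i) \<theta>"
      using pn[of \<theta>] by (auto split: split_indicator)
  qed
  finally have "(\<integral>\<^sup>+x. marg Lam prior p i x \<partial>lborel) \<noteq> \<infinity>" using prn by simp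
  then show ?thesis by (intro nn_integral_PInf_AE) measurable
qed

lemma J_eq:
  fixes PH lam mu :: "nat \<Rightarrow> real"
    and Lam :: "nat \<Rightarrow> real set"
    and prior :: "nat \<Rightarrow> real \<Rightarrow> real"
    and pD pE :: "nat \<Rightarrow> real \<Rightarrow> 'a::euclidean_space \<Rightarrow> real"
  assumes PH_nonneg: "\<And>i. i \<in> {0,1} \<Longrightarrow> 0 \<le> PH i"
    and coeff_nonneg: "\<And>i. i \<in> {0,1} \<Longrightarrow> 0 \<le> lam i \<and> 0 \<le> mu i"
    and Lam_meas: "\<And>i. i \<in> {0,1} \<Longrightarrow> Lam i \<in> sets lborel"
    and prior_meas: "\<And>i. i \<in> {0,1} \<Longrightarrow> prior i \<in> borel_measurable lborel"
    and prior_nonneg: "\<And>i \<theta>. i \<in> {0,1} \<Longrightarrow> 0 \<le> prior i \<theta>"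
    and pD_meas: "\<And>i. i \<in> {0,1} \<Longrightarrow>
        (\<lambda>(\<theta>, x). pD i \<theta> x) \<in> borel_measurable (lborel \<Otimes>\<^sub>M lborel)"
    and pE_meas: "\<And>i. i \<in> {0,1} \<Longrightarrow>
        (\<lambda>(\<theta>, x). pE i \<theta> x) \<in> borel_measurable (lborel \<Otimes>\<^sub>M lborel)"
    and pD_nonneg: "\<And>i \<theta> x. i \<in> {0,1} \<Longrightarrow> 0 \<le> pD i \<theta> x"
    and pE_nonneg: "\<And>i \<theta> x. i \<in> {0,1} \<Longrightarrow> 0 \<le> pE i \<theta> x"
    and dm[measurable]: "\<delta> \<in> borel_measurable lborel" and d01: "\<And>x. 0 \<le> \<delta> x \<and> \<delta> x \<le> 1"
    and [measurable]: "e0 \<in> borel_measurable lborel" "e1 \<in> borel_measurable lborel"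
  shows "J_NP PH lam mu Lam prior pD pE \<delta> e0 e1 =
    (\<integral>\<^sup>+x. ennreal (1 - \<delta> x) * (ennreal (PH 1 * lam 1) * marg Lam prior pD 1 x + ennreal (PH 0 * mu 0) * errf Lam prior pE 0 (e0 x) x)
         + ennreal (\<delta> x) * (ennreal (PH 0 * lam 0) * marg Lam prior pD 0 x + ennreal (PH 1 * mu 1) * errf Lam prior pE 1 (e1 x) x) \<partial>lborel)"
proof -
  have i01: "(0::nat) \<in> {0,1}" "(1::nat) \<in> {0,1}" by auto
  note [measurable] = Lam_meas[OF i01(1)] Lam_meas[OF i01(2)] prior_meas[OF i01(1)] prior_meas[OF i01(2)]
    meas_swap[OF pD_meas[OF i01(1)]] meas_swap[OF pD_meas[OF i01(2)]]
    meas_swap[OF pE_meas[OF i01(1)]] meas_swap[OF pE_meas[OF i01(2)]]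
  note [measurable] =
    meas_marg[where p=pD and i=0 and prior=prior and Lam=Lam, OF pD_meas[OF i01(1)] prior_meas[OF i01(1)] Lam_meas[OF i01(1)]]
    meas_marg[where p=pD and i=1 and prior=prior and Lam=Lam, OF pD_meas[OF i01(2)] prior_meas[OF i01(2)] Lam_meas[OF i01(2)]]
    meas_errf[where p=pE and i=0 and prior=prior and Lam=Lam, OF pE_meas[OF i01(1)] prior_meas[OF i01(1)] Lam_meas[OF i01(1)]]
    meas_errf[where p=pE and i=1 and prior=prior and Lam=Lam, OF pE_meas[OF i01(2)] prior_meas[OF i01(2)] Lam_meas[OF i01(2)]]
  have nn: "0 \<le> pD 0 \<theta> x * prior 0 \<theta>" "0 \<le> pD 1 \<theta> x * prior 1 \<theta>"
    "0 \<le> (c - \<theta>)\<^sup>2 * (pE 0 \<theta> x * prior 0 \<theta>)" "0 \<le> (c - \<theta>)\<^sup>2 * (pE 1 \<theta> x * prior 1 \<theta>)"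
    for \<theta> x c using pD_nonneg pE_nonneg prior_nonneg i01 by auto
  have d0: "0 \<le> \<delta> x" "0 \<le> 1 - \<delta> x" for x using d01[of x] by auto
  have a0: "alpha0 Lam prior pD \<delta> = (\<integral>\<^sup>+x. ennreal (\<delta> x) * marg Lam prior pD 0 x \<partial>lborel)"
    unfolding alpha0_def marg_def mult.assoc
    by (rule swap_pull) (measurable, simp add: d01, measurable, rule nn, measurable)
  have a1: "alpha1 Lam prior pD \<delta> = (\<integral>\<^sup>+x. ennreal (1 - \<delta> x) * marg Lam prior pD 1 x \<partial>lborel)"
    unfolding alpha1_def marg_def mult.assoc
    apply (rule swap_pull)
    subgoal by measurable
    subgoal by (simp add: d01)
    subgoal by measurable
    subgoal by (rule nn)
    subgoal by measurable
    done
  have b0: "beta0 Lam prior pE \<delta> e0 = (\<integral>\<^sup>+x. ennreal (1 - \<delta> x) * errf Lam prior pE 0 (e0 x) x \<partial>lborel)"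
    unfolding beta0_def errf_def mult.assoc
    by (rule swap_pull) (measurable, simp add: d01, measurable, rule nn, measurable)
  have b1: "beta1 Lam prior pE \<delta> e1 = (\<integral>\<^sup>+x. ennreal (\<delta> x) * errf Lam prior pE 1 (e1 x) x \<partial>lborel)"
    unfolding beta1_def errf_def mult.assoc
    by (rule swap_pull) (measurable, simp add: d01, measurable, rule nn, measurable)
  have c: "0 \<le> PH 0" "0 \<le> PH 1" "0 \<le> lam 0" "0 \<le> lam 1" "0 \<le> mu 0" "0 \<le> mu 1"
    using PH_nonneg coeff_nonneg i01 by auto
  have em: "ennreal (PH 0 * lam 0) = ennreal (PH 0) * ennreal (lam 0)"
    "ennreal (PH 1 * lam 1) = ennreal (PH 1) * ennreal (lam 1)"
    "ennreal (PH 0 * mu 0) = ennreal (PH 0) * ennreal (mu 0)"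
    "ennreal (PH 1 * mu 1) = ennreal (PH 1) * ennreal (mu 1)"
    by (rule ennreal_mult; rule c)+
  have "(\<integral>\<^sup>+x. ennreal (1 - \<delta> x) * (ennreal (PH 1 * lam 1) * marg Lam prior pD 1 x + ennreal (PH 0 * mu 0) * errf Lam prior pE 0 (e0 x) x)
         + ennreal (\<delta> x) * (ennreal (PH 0 * lam 0) * marg Lam prior pD 0 x + ennreal (PH 1 * mu 1) * errf Lam prior pE 1 (e1 x) x) \<partial>lborel)
      = (\<integral>\<^sup>+x. (ennreal (PH 0) * ennreal (lam 0)) * (ennreal (\<delta> x) * marg Lam prior pD 0 x)
          + ((ennreal (PH 0) * ennreal (mu 0)) * (ennreal (1 - \<delta> x) * errf Lam prior pE 0 (e0 x) x)
          + ((ennreal (PH 1) * ennreal (lam 1)) * (ennreal (1 - \<delta> x) * marg Lam prior pD 1 x)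
          + (ennreal (PH 1) * ennreal (mu 1)) * (ennreal (\<delta> x) * errf Lam prior pE 1 (e1 x) x))) \<partial>lborel)"
    unfolding em by (rule nn_integral_cong) (simp add: algebra_simps)
  also have "\<dots> = (ennreal (PH 0) * ennreal (lam 0)) * alpha0 Lam prior pD \<delta>
          + ((ennreal (PH 0) * ennreal (mu 0)) * beta0 Lam prior pE \<delta> e0
          + ((ennreal (PH 1) * ennreal (lam 1)) * alpha1 Lam prior pD \<delta>
          + (ennreal (PH 1) * ennreal (mu 1)) * beta1 Lam prior pE \<delta> e1))"
    unfolding a0 a1 b0 b1
    apply (subst nn_integral_add; (measurable)?)+
    apply (subst nn_integral_cmult; (measurable)?)+
    done
  also have "\<dots> = J_NP PH lam mu Lam prior pD pE \<delta> e0 e1"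
    unfolding J_NP_def by (simp add: algebra_simps)
  finally show ?thesis by simp
qed

theorem theorem4:
  fixes PH lam mu :: "nat \<Rightarrow> real"
    and Lam :: "nat \<Rightarrow> real set"
    and prior :: "nat \<Rightarrow> real \<Rightarrow> real"
    and pD pE :: "nat \<Rightarrow> real \<Rightarrow> 'a::euclidean_space \<Rightarrow> real"
    and \<kappa> :: real
  assumes PH_nonneg: "\<And>i. i \<in> {0,1} \<Longrightarrow> 0 \<le> PH i"
    and PH_sum: "PH 0 + PH 1 = 1"
    and coeff_nonneg: "\<And>i. i \<in> {0,1} \<Longrightarrow> 0 \<le> lam i \<and> 0 \<le> mu i"
    and Lam_meas: "\<And>i. i \<in> {0,1} \<Longrightarrow> Lam i \<in> sets lborel"
    and prior_meas: "\<And>i. i \<in> {0,1} \<Longrightarrow> prior i \<in> borel_measurable lborel"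
    and prior_nonneg: "\<And>i \<theta>. i \<in> {0,1} \<Longrightarrow> 0 \<le> prior i \<theta>"
    and prior_norm: "\<And>i. i \<in> {0,1} \<Longrightarrow> (\<integral>\<^sup>+ \<theta>\<in>Lam i. ennreal (prior i \<theta>) \<partial>lborel) = 1"
    and pD_meas: "\<And>i. i \<in> {0,1} \<Longrightarrow>
        (\<lambda>(\<theta>, x). pD i \<theta> x) \<in> borel_measurable (lborel \<Otimes>\<^sub>M lborel)"
    and pE_meas: "\<And>i. i \<in> {0,1} \<Longrightarrow>
        (\<lambda>(\<theta>, x). pE i \<theta> x) \<in> borel_measurable (lborel \<Otimes>\<^sub>M lborel)"
    and pD_nonneg: "\<And>i \<theta> x. i \<in> {0,1} \<Longrightarrow> 0 \<le> pD i \<theta> x"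
    and pE_nonneg: "\<And>i \<theta> x. i \<in> {0,1} \<Longrightarrow> 0 \<le> pE i \<theta> x"
    and pD_norm: "\<And>i \<theta>. i \<in> {0,1} \<Longrightarrow> \<theta> \<in> Lam i \<Longrightarrow>
        (\<integral>\<^sup>+ x. ennreal (pD i \<theta> x) \<partial>lborel) = 1"
    and pE_norm: "\<And>i \<theta>. i \<in> {0,1} \<Longrightarrow> \<theta> \<in> Lam i \<Longrightarrow>
        (\<integral>\<^sup>+ x. ennreal (pE i \<theta> x) \<partial>lborel) = 1"
    and kappa: "0 \<le> \<kappa>" "\<kappa> \<le> 1"
  defines "D \<equiv> \<lambda>x i. D_NP PH lam mu Lam prior pD pE i x"
  shows "(\<forall>\<delta> est0 est1.
            \<delta> \<in> borel_measurable lborel \<and> (\<forall>x. 0 \<le> \<delta> x \<and> \<delta> x \<le> 1) \<and>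
            est0 \<in> borel_measurable lborel \<and> (\<forall>x. est0 x \<in> Lam 0) \<and>
            est1 \<in> borel_measurable lborel \<and> (\<forall>x. est1 x \<in> Lam 1) \<longrightarrow>
            J_NP PH lam mu Lam prior pD pE (delta_star D \<kappa>)
                 (post_mean Lam prior pE 0) (post_mean Lam prior pE 1)
            \<le> J_NP PH lam mu Lam prior pD pE \<delta> est0 est1)
       \<and> J_NP PH lam mu Lam prior pD pE (delta_star D \<kappa>)
                 (post_mean Lam prior pE 0) (post_mean Lam prior pE 1)
         = (\<integral>\<^sup>+ x. min (D x 0) (D x 1) \<partial>lborel)"
proof -
  have i01: "(0::nat) \<in> {0,1}" "(1::nat) \<in> {0,1}" by auto
  note [measurable] = Lam_meas[OF i01(1)] Lam_meas[OF i01(2)] prior_meas[OF i01(1)] prior_meas[OF i01(2)]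
  note mD0 = meas_marg[where p=pD and i=0 and prior=prior and Lam=Lam, OF pD_meas[OF i01(1)] prior_meas[OF i01(1)] Lam_meas[OF i01(1)]]
  note mD1 = meas_marg[where p=pD and i=1 and prior=prior and Lam=Lam, OF pD_meas[OF i01(2)] prior_meas[OF i01(2)] Lam_meas[OF i01(2)]]
  note mE0 = meas_marg[where p=pE and i=0 and prior=prior and Lam=Lam, OF pE_meas[OF i01(1)] prior_meas[OF i01(1)] Lam_meas[OF i01(1)]]
  note mE1 = meas_marg[where p=pE and i=1 and prior=prior and Lam=Lam, OF pE_meas[OF i01(2)] prior_meas[OF i01(2)] Lam_meas[OF i01(2)]]
  note PV0 = meas_post_var[where p=pE and i=0 and prior=prior and Lam=Lam, OF pE_meas[OF i01(1)] prior_meas[OF i01(1)] Lam_meas[OF i01(1)]]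
  note PV1 = meas_post_var[where p=pE and i=1 and prior=prior and Lam=Lam, OF pE_meas[OF i01(2)] prior_meas[OF i01(2)] Lam_meas[OF i01(2)]]
  note PM0 = meas_post_mean[where p=pE and i=0 and prior=prior and Lam=Lam, OF pE_meas[OF i01(1)] prior_meas[OF i01(1)] Lam_meas[OF i01(1)]]
  note PM1 = meas_post_mean[where p=pE and i=1 and prior=prior and Lam=Lam, OF pE_meas[OF i01(2)] prior_meas[OF i01(2)] Lam_meas[OF i01(2)]]
  define V0 where "V0 x = post_var Lam prior pE 0 x * marg Lam prior pE 0 x" for x
  define V1 where "V1 x = post_var Lam prior pE 1 x * marg Lam prior pE 1 x" for x
  have Dx0: "D x 0 = ennreal (PH 1 * lam 1) * marg Lam prior pD 1 x + ennreal (PH 0 * mu 0) * V0 x" for x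
    unfolding D_def D_NP_def V0_def by (simp add: mult.assoc)
  have Dx1: "D x 1 = ennreal (PH 0 * lam 0) * marg Lam prior pD 0 x + ennreal (PH 1 * mu 1) * V1 x" for x
    unfolding D_def D_NP_def V1_def by (simp add: mult.assoc)
  have V0m: "V0 \<in> borel_measurable lborel" 
    unfolding V0_def[abs_def] by (rule borel_measurable_times_ennreal[OF PV0 mE0])
  have V1m: "V1 \<in> borel_measurable lborel" 
    unfolding V1_def[abs_def] by (rule borel_measurable_times_ennreal[OF PV1 mE1])
  have D0m[measurable]: "(\<lambda>x. D x 0) \<in> borel_measurable lborel"
    unfolding Dx0 by (intro borel_measurable_add borel_measurable_times_ennreal borel_measurable_const mD1 V0m)
  have D1m[measurable]: "(\<lambda>x. D x 1) \<in> borel_measurable lborel"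
    unfolding Dx1 by (intro borel_measurable_add borel_measurable_times_ennreal borel_measurable_const mD0 V1m)
  have dsm: "delta_star D \<kappa> \<in> borel_measurable lborel"
    unfolding delta_star_def[abs_def] by measurable
  have ds01: "\<And>x. 0 \<le> delta_star D \<kappa> x \<and> delta_star D \<kappa> x \<le> 1"
    using kappa by (simp add: delta_star_def)
  have AE0: "AE x in lborel. marg Lam prior pE 0 x \<noteq> \<infinity>"
    by (rule marg_AE_fin[where p=pE and prior=prior and Lam=Lam, OF pE_meas[OF i01(1)] prior_meas[OF i01(1)] Lam_meas[OF i01(1)]])
       (use pE_nonneg prior_nonneg pE_norm prior_norm i01 in auto)
  have AE1: "AE x in lborel. marg Lam prior pE 1 x \<noteq> \<infinity>"
    by (rule marg_AE_fin[where p=pE and prior=prior and Lam=Lam, OF pE_meas[OF i01(2)] prior_meas[OF i01(2)] Lam_meas[OF i01(2)]])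
       (use pE_nonneg prior_nonneg pE_norm prior_norm i01 in auto)
  have errf_alt: "errf Lam prior p i c x = (\<integral>\<^sup>+\<theta>\<in>Lam i. ennreal ((c - \<theta>)\<^sup>2 * p i \<theta> x * prior i \<theta>) \<partial>lborel)"
    for p :: "nat \<Rightarrow> real \<Rightarrow> 'a \<Rightarrow> real" and i c x
    by (simp add: errf_def mult.assoc)
  have PT: "AE x in lborel. (\<forall>c. V0 x \<le> errf Lam prior pE 0 c x) \<and> errf Lam prior pE 0 (post_mean Lam prior pE 0 x) x = V0 x
      \<and> (\<forall>c. V1 x \<le> errf Lam prior pE 1 c x) \<and> errf Lam prior pE 1 (post_mean Lam prior pE 1 x) x = V1 x"
    using AE0 AE1
  proof eventually_elim
    case (elim x)
    have s0: "(\<lambda>\<theta>. pE 0 \<theta> x) \<in> borel_measurable lborel" by (rule meas_sec[OF pE_meas[OF i01(1)]])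
    have s1: "(\<lambda>\<theta>. pE 1 \<theta> x) \<in> borel_measurable lborel" by (rule meas_sec[OF pE_meas[OF i01(2)]])
    have n0: "\<And>\<theta>. 0 \<le> pE 0 \<theta> x" "\<And>\<theta>. 0 \<le> prior 0 \<theta>" using pE_nonneg prior_nonneg i01 by auto
    have n1: "\<And>\<theta>. 0 \<le> pE 1 \<theta> x" "\<And>\<theta>. 0 \<le> prior 1 \<theta>" using pE_nonneg prior_nonneg i01 by auto
    note e0 = err_pt[where p=pE and i=0 and prior=prior and Lam=Lam and x=x, OF s0 prior_meas[OF i01(1)] Lam_meas[OF i01(1)] n0 elim(1)]
    note e1 = err_pt[where p=pE and i=1 and prior=prior and Lam=Lam and x=x, OF s1 prior_meas[OF i01(2)] Lam_meas[OF i01(2)] n1 elim(2)]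
    show ?case unfolding errf_alt V0_def V1_def using e0 e1 by auto
  qed
  define G where "G \<delta> e0 e1 x = ennreal (1 - \<delta> x) * (ennreal (PH 1 * lam 1) * marg Lam prior pD 1 x + ennreal (PH 0 * mu 0) * errf Lam prior pE 0 (e0 x) x)
         + ennreal (\<delta> x) * (ennreal (PH 0 * lam 0) * marg Lam prior pD 0 x + ennreal (PH 1 * mu 1) * errf Lam prior pE 1 (e1 x) x)"
    for \<delta> e0 e1 :: "'a \<Rightarrow> real" and x
  have JG: "J_NP PH lam mu Lam prior pD pE \<delta> e0 e1 = (\<integral>\<^sup>+x. G \<delta> e0 e1 x \<partial>lborel)"
    if "\<delta> \<in> borel_measurable lborel" "\<And>x. 0 \<le> \<delta> x \<and> \<delta> x \<le> 1"
       "e0 \<in> borel_measurable lborel" "e1 \<in> borel_measurable lborel" for \<delta> e0 e1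
    unfolding G_def
    by (rule J_eq[OF PH_nonneg coeff_nonneg Lam_meas prior_meas prior_nonneg pD_meas pE_meas pD_nonneg pE_nonneg that])
  have one: "ennreal (1 - t) + ennreal t = 1" if "0 \<le> t" "t \<le> 1" for t :: real
    using that by (subst ennreal_plus[symmetric]) auto
  have Jstar: "J_NP PH lam mu Lam prior pD pE (delta_star D \<kappa>) (post_mean Lam prior pE 0) (post_mean Lam prior pE 1)
      = (\<integral>\<^sup>+ x. min (D x 0) (D x 1) \<partial>lborel)"
    unfolding JG[OF dsm ds01 PM0 PM1]
  proof (rule nn_integral_cong_AE)
    show "AE x in lborel. G (delta_star D \<kappa>) (post_mean Lam prior pE 0) (post_mean Lam prior pE 1) x = min (D x 0) (D x 1)"
      using PT
    proof eventually_elim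
      case (elim x)
      have "G (delta_star D \<kappa>) (post_mean Lam prior pE 0) (post_mean Lam prior pE 1) x
          = ennreal (1 - delta_star D \<kappa> x) * D x 0 + ennreal (delta_star D \<kappa> x) * D x 1"
        unfolding G_def Dx0 Dx1 using elim by simp
      also have "\<dots> = min (D x 0) (D x 1)"
      proof (cases "D x 0 < D x 1")
        case True then show ?thesis by (simp add: delta_star_def)
      next
        case False
        show ?thesis
        proof (cases "D x 0 = D x 1")
          case True
          have "ennreal (1 - \<kappa>) * D x 0 + ennreal \<kappa> * D x 0 = (ennreal (1 - \<kappa>) + ennreal \<kappa>) * D x 0"
            by (simp add: distrib_right)
          also have "\<dots> = D x 0" using one[OF kappa] by simp
          finally show ?thesis using True False by (simp add: delta_star_def)
        next
          case False2: False
          then show ?thesis using False by (simp add: delta_star_def min_def)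
        qed
      qed
      finally show ?case .
    qed
  qed
  show ?thesis
  proof (intro conjI allI impI)
    fix \<delta> e0 e1 :: "'a \<Rightarrow> real"
    assume H: "\<delta> \<in> borel_measurable lborel \<and> (\<forall>x. 0 \<le> \<delta> x \<and> \<delta> x \<le> 1) \<and>
            e0 \<in> borel_measurable lborel \<and> (\<forall>x. e0 x \<in> Lam 0) \<and>
            e1 \<in> borel_measurable lborel \<and> (\<forall>x. e1 x \<in> Lam 1)"
    have "(\<integral>\<^sup>+ x. min (D x 0) (D x 1) \<partial>lborel) \<le> (\<integral>\<^sup>+x. G \<delta> e0 e1 x \<partial>lborel)"
    proof (rule nn_integral_mono_AE)
      show "AE x in lborel. min (D x 0) (D x 1) \<le> G \<delta> e0 e1 x"
        using PT
      proof eventually_elim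
        case (elim x)
        have d: "0 \<le> \<delta> x" "\<delta> x \<le> 1" using H by auto
        have "min (D x 0) (D x 1) = (ennreal (1 - \<delta> x) + ennreal (\<delta> x)) * min (D x 0) (D x 1)"
          using one[OF d] by simp
        also have "\<dots> = ennreal (1 - \<delta> x) * min (D x 0) (D x 1) + ennreal (\<delta> x) * min (D x 0) (D x 1)"
          by (simp add: distrib_right)
        also have "\<dots> \<le> ennreal (1 - \<delta> x) * D x 0 + ennreal (\<delta> x) * D x 1"
          by (intro add_mono mult_left_mono) auto
        also have "\<dots> \<le> G \<delta> e0 e1 x"
          unfolding G_def Dx0 Dx1 using elim
          by (intro add_mono mult_left_mono) auto
        finally show ?case .
      qed
    qed
    also have "\<dots> = J_NP PH lam mu Lam prior pD pE \<delta> e0 e1"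
      using H by (intro JG[symmetric]) auto
    finally show "J_NP PH lam mu Lam prior pD pE (delta_star D \<kappa>) (post_mean Lam prior pE 0) (post_mean Lam prior pE 1)
        \<le> J_NP PH lam mu Lam prior pD pE \<delta> e0 e1"
      unfolding Jstar .
  next
    show "J_NP PH lam mu Lam prior pD pE (delta_star D \<kappa>) (post_mean Lam prior pE 0) (post_mean Lam prior pE 1)
      = (\<integral>\<^sup>+ x. min (D x 0) (D x 1) \<partial>lborel)" by (rule Jstar)
  qed
qed

end
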